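(* Let $\{S_k:k\in\mathbb{N}\}$ be independent and identically distributed random matrices and let $\tau_\ell,\gamma_\ell$ be as in the context. If, for some $\ell\in\mathbb{N}$, $\tau_{\ell-1}$ is finite, then the random variables $\tau_j-\tau_{j-1}$, $j\le \ell$, exist and are independent and identically distributed, and $\gamma_j$, $j\le\ell$, are independent and identically distributed.
   Context: $A\in\mathbb{R}^{m\times n}$, $B\in\mathbb{R}^{m\times m}$ symmetric positive definite with symmetric positive definite square root $B^{1/2}$; $S_k\in\mathbb{R}^{n\times p}$; $Q_k$ is a matrix whose columns form an orthonormal basis of $\operatorname{col}(B^{1/2}AS_k)$. Stopping times: $\tau_0=0$; if $\tau_{\ell}<\infty$, $\tau_{\ell+1}$ is the first index $j>\tau_\ell$ such that $\operatorname{col}(Q_{\tau_\ell+1})+\cdots+\operatorname{col}(Q_j)=\operatorname{col}(B^{1/2}A)$ (and $\tau_{\ell+1}=\infty$ otherwise). On $\{\tau_\ell<\infty\}$, $\gamma_\ell$ is the operator $2$-norm of the restriction of $\prod_{k=\tau_{\ell-1}+1}^{\tau_\ell}(I-Q_kQ_k^\top)$ to $\operatorname{col}(B^{1/2}A)$. *)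

theory Defs
  imports "HOL-Probability.Probability"
begin

definition colspace :: "real^'c^'r \<Rightarrow> (real^'r) set" where
  "colspace M = range (\<lambda>x. M *v x)"

definition oproj :: "(real^'r) set \<Rightarrow> real^'r \<Rightarrow> real^'r" where
  "oproj V x = (THE y. y \<in> V \<and> (\<forall>v\<in>V. (x - y) \<bullet> v = 0))"

(* the matrix of the orthogonal projector onto V; for Q with orthonormal columns
   spanning V this is Q Q^T *)
definition projmat :: "(real^'r) set \<Rightarrow> real^'r^'r" where
  "projmat V = (\<chi> i j. oproj V (axis j 1) $ i)"

primrec mprod :: "(nat \<Rightarrow> real^'r^'r) \<Rightarrow> nat \<Rightarrow> nat \<Rightarrow> real^'r^'r" where
  "mprod f a 0 = mat 1"
| "mprod f a (Suc c) = f (a + c) ** mprod f a c"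

definition opnorm_on :: "(real^'r) set \<Rightarrow> real^'r^'r \<Rightarrow> real" where
  "opnorm_on V T = Sup {norm (T *v x) | x. x \<in> V \<and> norm x \<le> 1}"

(* covering condition: col(Q_{t+1}) + ... + col(Q_j) = col(W), where col(Q_k) = col(M k) *)
definition covers :: "(nat \<Rightarrow> real^'c^'r) \<Rightarrow> real^'d^'r \<Rightarrow> nat \<Rightarrow> nat \<Rightarrow> bool" where
  "covers M W t j \<longleftrightarrow> span (\<Union>k\<in>{t+1..j}. colspace (M k)) = colspace W"

primrec tau :: "(nat \<Rightarrow> real^'c^'r) \<Rightarrow> real^'d^'r \<Rightarrow> nat \<Rightarrow> enat" where
  "tau M W 0 = 0"
| "tau M W (Suc l) =
     (case tau M W l of
        \<infinity> \<Rightarrow> \<infinity>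
      | enat t \<Rightarrow> (if \<exists>j>t. covers M W t j then enat (LEAST j. t < j \<and> covers M W t j) else \<infinity>))"

(* gamma_l (l \<ge> 1), defined on {tau_l < \<infinity>} (and tau_{l-1} < \<infinity> then holds);
   conventionally 0 elsewhere *)
definition gamma :: "(nat \<Rightarrow> real^'c^'r) \<Rightarrow> real^'d^'r \<Rightarrow> nat \<Rightarrow> real" where
  "gamma M W l =
     (case (tau M W (l - 1), tau M W l) of
        (enat a, enat b) \<Rightarrow>
          opnorm_on (colspace W)
            (mprod (\<lambda>k. mat 1 - projmat (colspace (M k))) (a + 1) (b - a))
      | _ \<Rightarrow> 0)"

definition sym_pd :: "real^'m^'m \<Rightarrow> bool" where
  "sym_pd B \<longleftrightarrow> transpose B = B \<and> (\<forall>x. x \<noteq> 0 \<longrightarrow> x \<bullet> (B *v x) > 0)"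

end

theory Submission
  imports Defs
begin


lemma oproj_props:
  fixes V :: "(real^'r) set"
  assumes V: "subspace V"
  shows "oproj V x \<in> V \<and> (\<forall>v\<in>V. (x - oproj V x) \<bullet> v = 0)"
proof -
  obtain y z where y: "y \<in> span V" and z: "\<And>w. w \<in> span V \<Longrightarrow> orthogonal z w" and xyz: "x = y + z"
    using orthogonal_subspace_decomp_exists[of V x] by blast
  have yV: "y \<in> V" using y V by (metis span_eq_iff)
  have "(x - y) \<bullet> v = 0" if "v \<in> V" for v
    using z[OF span_base[OF that]] xyz by (simp add: orthogonal_def)
  then have P: "y \<in> V \<and> (\<forall>v\<in>V. (x - y) \<bullet> v = 0)" using yV by blast
  have U: "y' = y" if "y' \<in> V \<and> (\<forall>v\<in>V. (x - y') \<bullet> v = 0)" for y'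
  proof -
    have d: "y' - y \<in> V" using that yV V by (simp add: subspace_diff)
    have "(x - y') \<bullet> (y' - y) = 0" "(x - y) \<bullet> (y' - y) = 0" using that P d by auto
    then have "(y' - y) \<bullet> (y' - y) = 0" by (simp add: inner_diff_left)
    then show ?thesis by simp
  qed
  have "(THE y. y \<in> V \<and> (\<forall>v\<in>V. (x - y) \<bullet> v = 0)) = y"
    by (rule the_equality) (use P U in blast)+
  then show ?thesis unfolding oproj_def using P by simp
qed

lemma subspace_colspace: "subspace (colspace (X::real^'c^'r))"
  unfolding colspace_def
  using linear_subspace_image[OF matrix_vector_mul_linear subspace_UNIV] by simp

lemma closed_colspace: "closed (colspace (X::real^'c^'r))"
  by (simp add: closed_subspace subspace_colspace)

lemma zero_colspace: "0 \<in> colspace (X::real^'c^'r)"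
  by (simp add: subspace_0 subspace_colspace)

lemma oproj_unique:
  fixes V :: "(real^'r) set"
  assumes V: "subspace V" and y: "y \<in> V" "\<forall>v\<in>V. (x - y) \<bullet> v = 0"
  shows "oproj V x = y"
proof -
  have P: "oproj V x \<in> V" "\<forall>v\<in>V. (x - oproj V x) \<bullet> v = 0" using oproj_props[OF V] by auto
  have d: "oproj V x - y \<in> V" using P y V by (simp add: subspace_diff)
  have "(x - oproj V x) \<bullet> (oproj V x - y) = 0" "(x - y) \<bullet> (oproj V x - y) = 0" using P y d by auto
  then have "(oproj V x - y) \<bullet> (oproj V x - y) = 0" by (simp add: inner_diff_left)
  then show ?thesis by simp
qed

lemma oproj_add:
  fixes V :: "(real^'r) set"
  assumes V: "subspace V"
  shows "oproj V (a + b) = oproj V a + oproj V b"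
proof (rule oproj_unique[OF V])
  have A: "oproj V a \<in> V" "\<forall>v\<in>V. (a - oproj V a) \<bullet> v = 0" using oproj_props[OF V] by auto
  have B: "oproj V b \<in> V" "\<forall>v\<in>V. (b - oproj V b) \<bullet> v = 0" using oproj_props[OF V] by auto
  show "oproj V a + oproj V b \<in> V" using A B V by (simp add: subspace_add)
  show "\<forall>v\<in>V. (a + b - (oproj V a + oproj V b)) \<bullet> v = 0"
  proof
    fix v assume "v \<in> V"
    then have "(a - oproj V a) \<bullet> v + (b - oproj V b) \<bullet> v = 0" using A B by simp
    then show "(a + b - (oproj V a + oproj V b)) \<bullet> v = 0"
      by (simp add: inner_diff_left inner_add_left algebra_simps)
  qed
qed

lemma oproj_dist_le:
  fixes V :: "(real^'r) set"
  assumes V: "subspace V" and v: "v \<in> V"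
  shows "norm (x - oproj V x) \<le> norm (x - v)"
proof -
  let ?p = "oproj V x"
  have P: "?p \<in> V" "\<forall>v\<in>V. (x - ?p) \<bullet> v = 0" using oproj_props[OF V] by auto
  have "?p - v \<in> V" using P v V by (simp add: subspace_diff)
  then have o: "(x - ?p) \<bullet> (?p - v) = 0" using P by auto
  have "(norm ((x - ?p) + (?p - v)))^2 = (norm (x - ?p))^2 + (norm (?p - v))^2"
    using norm_add_Pythagorean[OF o[folded orthogonal_def]] .
  then have "(norm (x - v))^2 = (norm (x - ?p))^2 + (norm (?p - v))^2" by simp
  moreover have "0 \<le> (norm (?p - v))^2" by simp
  ultimately have "(norm (x - ?p))^2 \<le> (norm (x - v))^2" by linarith
  then show ?thesis by (rule power2_le_imp_le) simp
qed

lemma infdist_oproj: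
  fixes V :: "(real^'r) set"
  assumes V: "subspace V"
  shows "infdist x V = norm (x - oproj V x)"
proof -
  have P: "oproj V x \<in> V" using oproj_props[OF V] by auto
  have ne: "V \<noteq> {}" using P by auto
  have "infdist x V \<le> norm (x - oproj V x)" using infdist_le[OF P, of x] by (simp add: dist_norm)
  moreover have "norm (x - oproj V x) \<le> infdist x V"
    unfolding infdist_notempty[OF ne]
  proof (rule cINF_greatest[OF ne])
    fix v assume "v \<in> V"
    then show "norm (x - oproj V x) \<le> dist x v" unfolding dist_norm by (rule oproj_dist_le[OF V])
  qed
  ultimately show ?thesis by simp
qed

lemma norm_oproj_sq:
  fixes V :: "(real^'r) set"
  assumes V: "subspace V"
  shows "(norm (oproj V x))^2 = (norm x)^2 - (infdist x V)^2"
proof -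
  let ?p = "oproj V x"
  have P: "?p \<in> V" "\<forall>v\<in>V. (x - ?p) \<bullet> v = 0" using oproj_props[OF V] by auto
  have o: "(x - ?p) \<bullet> ?p = 0" using P by auto
  have "(norm ((x - ?p) + ?p))^2 = (norm (x - ?p))^2 + (norm ?p)^2"
    using norm_add_Pythagorean[OF o[folded orthogonal_def]] .
  then have "(norm x)^2 = (norm (x - ?p))^2 + (norm ?p)^2" by simp
  then show ?thesis using infdist_oproj[OF V, of x] by simp
qed

lemma oproj_inner:
  fixes V :: "(real^'r) set"
  assumes V: "subspace V"
  shows "a \<bullet> oproj V b = oproj V a \<bullet> oproj V b"
proof -
  have A: "\<forall>v\<in>V. (a - oproj V a) \<bullet> v = 0" using oproj_props[OF V] by auto
  have "oproj V b \<in> V" using oproj_props[OF V] by auto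
  then have "(a - oproj V a) \<bullet> oproj V b = 0" using A by auto
  then show ?thesis by (simp add: inner_diff_left)
qed

lemma norm_add_sq: "(norm (a + b))^2 = (norm a)^2 + 2 * (a \<bullet> b) + (norm (b::real^'r))^2"
  unfolding power2_norm_eq_inner inner_add_left inner_add_right
  using inner_commute[of a b] by simp

definition nf :: "(real^'r) set \<Rightarrow> real^'r \<Rightarrow> real" where
  "nf V z = (norm z)^2 - (infdist z V)^2"

lemma projmat_entry:
  fixes V :: "(real^'r) set"
  assumes V: "subspace V"
  shows "projmat V $ i $ j = (nf V (axis i 1 + axis j 1) - nf V (axis i 1) - nf V (axis j 1)) / 2"
proof -
  let ?p = "oproj V"
  have "projmat V $ i $ j = ?p (axis j 1) $ i" by (simp add: projmat_def)
  also have "\<dots> = axis i 1 \<bullet> ?p (axis j 1)" by (simp add: inner_axis')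
  also have "\<dots> = ?p (axis i 1) \<bullet> ?p (axis j 1)" by (rule oproj_inner[OF V])
  also have "\<dots> = ((norm (?p (axis i 1) + ?p (axis j 1)))^2 - (norm (?p (axis i 1)))^2 - (norm (?p (axis j 1)))^2) / 2"
    by (simp add: norm_add_sq)
  also have "\<dots> = (nf V (axis i 1 + axis j 1) - nf V (axis i 1) - nf V (axis j 1)) / 2"
  proof -
    have nfp: "nf V z = (norm (?p z))^2" for z by (simp add: nf_def norm_oproj_sq[OF V])
    show ?thesis by (simp only: nfp oproj_add[OF V])
  qed
  finally show ?thesis .
qed




lemma meas_vec:
  fixes g :: "'i::finite \<Rightarrow> 'a \<Rightarrow> 'b::euclidean_space"
  assumes "\<And>i. g i \<in> borel_measurable N"
  shows "(\<lambda>x. \<chi> i. g i x) \<in> borel_measurable N"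
proof (subst borel_measurable_euclidean_space, intro ballI)
  fix b :: "'b^'i" assume "b \<in> Basis"
  then obtain i u where b: "b = axis i u" "u \<in> Basis" unfolding Basis_vec_def by auto
  have "(\<lambda>x. (\<chi> i. g i x) \<bullet> b) = (\<lambda>x. g i x \<bullet> u)" by (simp add: b inner_axis)
  also have "\<dots> \<in> borel_measurable N" using assms by (intro borel_measurable_inner) auto
  finally show "(\<lambda>x. (\<chi> i. g i x) \<bullet> b) \<in> borel_measurable N" .
qed

lemma cont_mv: "continuous_on UNIV (\<lambda>p::((real^'c^'r) \<times> (real^'c)). fst p *v snd p)"
  unfolding matrix_vector_mult_def by (intro continuous_intros)

lemma cont_mm: "continuous_on UNIV (\<lambda>p::((real^'c^'r) \<times> (real^'d^'c)). fst p ** snd p)"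
  unfolding matrix_matrix_mult_def by (intro continuous_intros)

lemma meas_mm:
  fixes f :: "'a \<Rightarrow> real^'c^'r" and g :: "'a \<Rightarrow> real^'d^'c"
  assumes "f \<in> borel_measurable N" "g \<in> borel_measurable N"
  shows "(\<lambda>z. f z ** g z) \<in> borel_measurable N"
  using borel_measurable_continuous_Pair[OF assms cont_mm] by simp

lemma meas_mv:
  fixes f :: "'a \<Rightarrow> real^'c^'r" and g :: "'a \<Rightarrow> real^'c"
  assumes "f \<in> borel_measurable N" "g \<in> borel_measurable N"
  shows "(\<lambda>z. f z *v g z) \<in> borel_measurable N"
  using borel_measurable_continuous_Pair[OF assms cont_mv] by simp

lemma infdist_colspace_less:
  "infdist v (colspace (Q::real^'c^'r)) < a \<longleftrightarrow> (\<exists>y. dist v (Q *v y) < a)"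
proof -
  have ne: "colspace Q \<noteq> {}" using zero_colspace by blast
  have bdd: "bdd_below ((\<lambda>w. dist v w) ` colspace Q)" by (rule bdd_belowI[of _ 0]) auto
  show ?thesis unfolding infdist_notempty[OF ne] cINF_less_iff[OF ne bdd]
    by (auto simp: colspace_def)
qed

lemma meas_hinf: "(\<lambda>p::((real^'c^'r) \<times> (real^'r)). infdist (snd p) (colspace (fst p))) \<in> borel_measurable borel"
proof (subst borel_measurable_iff_less, intro allI)
  fix a
  have "{w \<in> space borel. infdist (snd w) (colspace (fst w)) < a}
      = (\<Union>y. {p::((real^'c^'r) \<times> (real^'r)). dist (snd p) (fst p *v y) < a})"
    by (auto simp: infdist_colspace_less)
  also have "open \<dots>"
  proof (intro open_UN ballI open_Collect_less)
    fix y :: "real^'c"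
    show "continuous_on UNIV (\<lambda>p::((real^'c^'r) \<times> (real^'r)). dist (snd p) (fst p *v y))"
      unfolding matrix_vector_mult_def by (intro continuous_intros)
  qed (intro continuous_intros)
  finally have O: "open {w \<in> space (borel :: ((real^'c^'r) \<times> (real^'r)) measure). infdist (snd w) (colspace (fst w)) < a}" .
  show "{w \<in> space (borel :: ((real^'c^'r) \<times> (real^'r)) measure). infdist (snd w) (colspace (fst w)) < a} \<in> sets borel" using borel_open[OF O] .
qed

lemma meas_infdist:
  fixes Q :: "'a \<Rightarrow> real^'c^'r" and v :: "'a \<Rightarrow> real^'r"
  assumes "Q \<in> borel_measurable N" "v \<in> borel_measurable N"
  shows "(\<lambda>z. infdist (v z) (colspace (Q z))) \<in> borel_measurable N"
proof -
  have "(\<lambda>z. (Q z, v z)) \<in> measurable N (borel \<Otimes>\<^sub>M borel)"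
    using assms by (rule measurable_Pair)
  then have P: "(\<lambda>z. (Q z, v z)) \<in> borel_measurable N" by (simp add: borel_prod)
  show ?thesis using measurable_compose[OF P meas_hinf] by simp
qed

lemma projmat_colspace_eq:
  "projmat (colspace (Q::real^'c^'r)) = (\<chi> i j. (nf (colspace Q) (axis i 1 + axis j 1) - nf (colspace Q) (axis i 1) - nf (colspace Q) (axis j 1)) / 2)"
  by (simp add: vec_eq_iff projmat_entry[OF subspace_colspace])

lemma meas_nf:
  fixes Q :: "'a \<Rightarrow> real^'c^'r"
  assumes "Q \<in> borel_measurable N"
  shows "(\<lambda>z. nf (colspace (Q z)) w) \<in> borel_measurable N"
  unfolding nf_def using meas_infdist[OF assms, of "\<lambda>_. w"] by measurable

lemma meas_projmat:
  fixes Q :: "'a \<Rightarrow> real^'c^'r"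
  assumes Q: "Q \<in> borel_measurable N"
  shows "(\<lambda>z. projmat (colspace (Q z))) \<in> borel_measurable N"
  unfolding projmat_colspace_eq
  by (intro meas_vec borel_measurable_divide borel_measurable_diff meas_nf[OF Q] borel_measurable_const)

lemma meas_opnorm:
  fixes V :: "(real^'r) set"
  assumes V0: "0 \<in> V"
  shows "(\<lambda>T::real^'r^'r. opnorm_on V T) \<in> borel_measurable borel"
proof (subst borel_measurable_iff_greater, intro allI)
  fix a
  let ?B = "{x. x \<in> V \<and> norm x \<le> 1}"
  have eq: "a < opnorm_on V T \<longleftrightarrow> (\<exists>x\<in>?B. a < norm (T *v x))" for T
  proof -
    have ne: "{norm (T *v x) | x. x \<in> V \<and> norm x \<le> 1} \<noteq> {}" using V0 by auto
    obtain K where K: "\<And>x. norm (T *v x) \<le> norm x * K"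
      using bounded_linear.bounded[OF matrix_vector_mul_bounded_linear[of T]] by blast
    have bdd: "bdd_above {norm (T *v x) | x. x \<in> V \<and> norm x \<le> 1}"
    proof (rule bdd_aboveI[of _ "max K 0"])
      fix y assume "y \<in> {norm (T *v x) | x. x \<in> V \<and> norm x \<le> 1}"
      then obtain x where x: "y = norm (T *v x)" "norm x \<le> 1" by auto
      have "norm x * K \<le> max K 0"
        using x(2) by (cases "K \<ge> 0") (auto intro: mult_left_le_one_le order_trans[of _ 0] simp: mult_nonneg_nonpos)
      then show "y \<le> max K 0" using K[of x] x by linarith
    qed
    show ?thesis unfolding opnorm_on_def less_cSup_iff[OF ne bdd] by blast
  qed
  have "{w \<in> space borel. a < opnorm_on V w} = (\<Union>x\<in>?B. {T::real^'r^'r. a < norm (T *v x)})"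
    using eq by auto
  also have "open \<dots>"
  proof (intro open_UN ballI open_Collect_less)
    fix x :: "real^'r"
    show "continuous_on UNIV (\<lambda>T::real^'r^'r. norm (T *v x))"
      unfolding matrix_vector_mult_def by (intro continuous_intros)
  qed (intro continuous_intros)
  finally have O: "open {w \<in> space borel. a < opnorm_on V w}" .
  show "{w \<in> space borel. a < opnorm_on V w} \<in> sets borel" using borel_open[OF O] .
qed




lemma sum_mv: "finite K \<Longrightarrow> (\<Sum>k\<in>K. (F k :: real^'c^'r)) *v x = (\<Sum>k\<in>K. F k *v x)"
  by (induction K rule: finite_induct) (auto simp: matrix_vector_mult_add_rdistrib)

lemma inner_mv: "(v::real^'r) \<bullet> ((A::real^'c^'r) *v w) = (transpose A *v v) \<bullet> w"
  by (simp add: dot_lmul_matrix[symmetric])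

lemma span_colspace_sum:
  fixes Mk :: "nat \<Rightarrow> real^'c^'r"
  assumes K: "finite K"
  shows "span (\<Union>k\<in>K. colspace (Mk k)) = colspace (\<Sum>k\<in>K. Mk k ** transpose (Mk k))"
    (is "_ = colspace ?Z")
proof
  let ?R = "colspace ?Z"
  have R: "subspace ?R" by (rule subspace_colspace)
  show "span (\<Union>k\<in>K. colspace (Mk k)) \<subseteq> ?R"
  proof (rule span_minimal[OF _ R], intro UN_least subsetI)
    fix k u assume k: "k \<in> K" and "u \<in> colspace (Mk k)"
    then obtain y where u: "u = Mk k *v y" by (auto simp: colspace_def)
    let ?v = "u - oproj ?R u"
    have P: "oproj ?R u \<in> ?R" "\<forall>r\<in>?R. ?v \<bullet> r = 0" using oproj_props[OF R] by auto
    have "?Z *v ?v \<in> ?R" by (simp add: colspace_def)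
    then have "0 = ?v \<bullet> (?Z *v ?v)" using P by auto
    also have "\<dots> = (\<Sum>j\<in>K. ?v \<bullet> (Mk j *v (transpose (Mk j) *v ?v)))"
      by (simp add: sum_mv[OF K] inner_sum_right matrix_vector_mul_assoc del: transpose_matrix_vector)
    also have "\<dots> = (\<Sum>j\<in>K. (transpose (Mk j) *v ?v) \<bullet> (transpose (Mk j) *v ?v))"
      by (simp only: inner_mv)
    finally have "(\<Sum>j\<in>K. (transpose (Mk j) *v ?v) \<bullet> (transpose (Mk j) *v ?v)) = 0" by simp
    then have "\<forall>j\<in>K. (transpose (Mk j) *v ?v) \<bullet> (transpose (Mk j) *v ?v) = 0"
      using K by (subst (asm) sum_nonneg_eq_0_iff) auto
    then have t0: "transpose (Mk k) *v ?v = 0" using k by simp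
    have "?v \<bullet> u = 0" using t0 by (simp add: u inner_mv)
    moreover have "?v \<bullet> oproj ?R u = 0" using P by auto
    ultimately have "?v \<bullet> ?v = 0" by (simp add: inner_diff_right)
    then have "u = oproj ?R u" by simp
    then show "u \<in> ?R" using P by simp
  qed
  show "?R \<subseteq> span (\<Union>k\<in>K. colspace (Mk k))"
  proof
    fix u assume "u \<in> ?R"
    then obtain x where u: "u = ?Z *v x" by (auto simp: colspace_def)
    have "u = (\<Sum>k\<in>K. Mk k *v (transpose (Mk k) *v x))"
      by (simp add: u sum_mv[OF K] matrix_vector_mul_assoc del: transpose_matrix_vector)
    also have "\<dots> \<in> span (\<Union>k\<in>K. colspace (Mk k))"
    proof (rule span_sum)
      fix k assume "k \<in> K"
      then show "Mk k *v (transpose (Mk k) *v x) \<in> span (\<Union>k\<in>K. colspace (Mk k))"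
        by (intro span_base) (auto simp: colspace_def)
    qed
    finally show "u \<in> span (\<Union>k\<in>K. colspace (Mk k))" .
  qed
qed

lemma covers_iff:
  "covers M W t j \<longleftrightarrow> colspace (\<Sum>k\<in>{t+1..j}. M k ** transpose (M k)) = colspace W"
  unfolding covers_def by (simp add: span_colspace_sum)

lemma colspace_subset_iff:
  fixes X :: "real^'c^'r"
  assumes V: "subspace V"
  shows "colspace X \<subseteq> V \<longleftrightarrow> (\<forall>i. X *v axis i 1 \<in> V)"
proof
  assume "colspace X \<subseteq> V" then show "\<forall>i. X *v axis i 1 \<in> V" by (auto simp: colspace_def)
next
  assume A: "\<forall>i. X *v axis i 1 \<in> V"
  show "colspace X \<subseteq> V"
  proof
    fix u assume "u \<in> colspace X"
    then obtain x where u: "u = X *v x" by (auto simp: colspace_def)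
    have "u = (\<Sum>i\<in>UNIV. (x$i) *\<^sub>R column i X)"
      by (simp add: u matrix_mult_sum scalar_mult_eq_scaleR)
    also have "\<dots> = (\<Sum>i\<in>UNIV. (x$i) *\<^sub>R (X *v axis i 1))"
      by (simp add: matrix_vector_mult_basis)
    also have "\<dots> \<in> V" using A V by (intro subspace_sum subspace_scale) auto
    finally show "u \<in> V" .
  qed
qed

lemma mem_colspace_iff: "v \<in> colspace (Q::real^'c^'r) \<longleftrightarrow> infdist v (colspace Q) = 0"
  using in_closed_iff_infdist_zero[OF closed_colspace] zero_colspace by blast

lemma colspace_eq_iff:
  fixes X :: "real^'c^'r" and Y :: "real^'d^'r"
  shows "colspace X = colspace Y \<longleftrightarrow>
    (\<forall>i. infdist (X *v axis i 1) (colspace Y) = 0) \<and> (\<forall>i. infdist (Y *v axis i 1) (colspace X) = 0)"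
  by (auto simp: colspace_subset_iff[OF subspace_colspace] mem_colspace_iff[symmetric] set_eq_subset)

lemma cont_transpose: "continuous_on UNIV (transpose :: real^'c^'r \<Rightarrow> real^'r^'c)"
  unfolding transpose_def by (intro continuous_intros)

lemma meas_transpose:
  fixes f :: "'a \<Rightarrow> real^'c^'r"
  assumes "f \<in> borel_measurable N"
  shows "(\<lambda>z. transpose (f z)) \<in> borel_measurable N"
  using measurable_compose[OF assms borel_measurable_continuous_onI[OF cont_transpose]] by simp

lemma pred_zero:
  fixes f :: "'a \<Rightarrow> real"
  assumes "f \<in> borel_measurable N"
  shows "Measurable.pred N (\<lambda>z. f z = 0)"
  using assms by measurable

lemma pred_all_finite:
  fixes P :: "'a \<Rightarrow> 'i::finite \<Rightarrow> bool"
  assumes "\<And>i. Measurable.pred N (\<lambda>z. P z i)"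
  shows "Measurable.pred N (\<lambda>z. \<forall>i. P z i)"
  using pred_intros_finite(3)[of UNIV P N] assms by simp

lemma pred_covers:
  fixes Mz :: "nat \<Rightarrow> 'a \<Rightarrow> real^'c^'r" and W :: "real^'d^'r"
  assumes Mz: "\<And>k. Mz k \<in> borel_measurable N"
  shows "Measurable.pred N (\<lambda>z. covers (\<lambda>k. Mz k z) W t j)"
proof -
  let ?Z = "\<lambda>z. \<Sum>k\<in>{t+1..j}. Mz k z ** transpose (Mz k z)"
  have Z: "?Z \<in> borel_measurable N"
    by (intro borel_measurable_sum meas_mm meas_transpose Mz)
  have eq: "covers (\<lambda>k. Mz k z) W t j \<longleftrightarrow>
    (\<forall>i. infdist (?Z z *v axis i 1) (colspace W) = 0) \<and> (\<forall>i. infdist (W *v axis i 1) (colspace (?Z z)) = 0)" for z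
    unfolding covers_iff colspace_eq_iff ..
  have A: "Measurable.pred N (\<lambda>z. infdist (?Z z *v axis i 1) (colspace W) = 0)" for i
    by (intro pred_zero meas_infdist meas_mv Z borel_measurable_const)
  have B: "Measurable.pred N (\<lambda>z. infdist (W *v axis i 1) (colspace (?Z z)) = 0)" for i
    by (intro pred_zero meas_infdist Z borel_measurable_const)
  show ?thesis unfolding eq
    by (intro pred_intros_logic pred_all_finite A B)
qed




definition first :: "(nat \<Rightarrow> real^'c^'r) \<Rightarrow> real^'d^'r \<Rightarrow> nat \<Rightarrow> enat" where
  "first M W t = (if \<exists>j>t. covers M W t j then enat (LEAST j. t < j \<and> covers M W t j) else \<infinity>)"

lemma tau_Suc': "tau M W (Suc l) = (case tau M W l of \<infinity> \<Rightarrow> \<infinity> | enat t \<Rightarrow> first M W t)"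
  by (simp add: first_def split: enat.split)

declare tau.simps(2)[simp del]

definition shiftM :: "nat \<Rightarrow> (nat \<Rightarrow> 'a) \<Rightarrow> nat \<Rightarrow> 'a" where
  "shiftM t M = (\<lambda>k. M (t + k))"

lemma UN_shift: "(\<Union>k\<in>{t+a..t+b}. f k) = (\<Union>k\<in>{a..b}. f (t + k::nat))"
  apply (rule set_eqI)
  apply auto
  apply (rule_tac x="xa - t" in bexI)
  apply auto
  done

lemma covers_shift: "covers M W (t + a) (t + b) = covers (shiftM t M) W a b"
  unfolding covers_def shiftM_def
  using UN_shift[where t=t and a="a+1" and b=b and f="\<lambda>k. colspace (M k)"] by (simp add: add.assoc)

lemma first_shift: "first M W (t + a) = enat t + first (shiftM t M) W a"
proof (cases "\<exists>j>a. covers (shiftM t M) W a j")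
  case True
  let ?L = "LEAST j. a < j \<and> covers (shiftM t M) W a j"
  have L: "a < ?L \<and> covers (shiftM t M) W a ?L" using True by (metis (mono_tags, lifting) LeastI)
  have Lmin: "\<And>j. a < j \<and> covers (shiftM t M) W a j \<Longrightarrow> ?L \<le> j" by (rule Least_le)
  have c: "covers M W (t + a) (t + ?L)" using L covers_shift by metis
  have ex: "\<exists>j>t + a. covers M W (t + a) j" using c L by (intro exI[where x="t + ?L"]) simp
  have "(LEAST j. t + a < j \<and> covers M W (t + a) j) = t + ?L"
  proof (rule Least_equality)
    show "t + a < t + ?L \<and> covers M W (t + a) (t + ?L)" using L c by simp
    fix y assume y: "t + a < y \<and> covers M W (t + a) y"
    then have "covers (shiftM t M) W a (y - t)" using covers_shift[of M W t a "y - t"] by simp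
    then have "?L \<le> y - t" using y by (intro Lmin) auto
    then show "t + ?L \<le> y" using y by arith
  qed
  then show ?thesis using True ex by (simp add: first_def)
next
  case False
  have "\<not> (\<exists>j>t + a. covers M W (t + a) j)"
  proof
    assume "\<exists>j>t + a. covers M W (t + a) j"
    then obtain j where "j > t + a" "covers M W (t + a) j" by auto
    then have "covers (shiftM t M) W a (j - t)" "j - t > a" using covers_shift[of M W t a "j - t"] by auto
    then show False using False by auto
  qed
  then show ?thesis using False by (simp add: first_def)
qed

lemma tau_one: "tau M W 1 = first M W 0"
  using tau_Suc'[of M W 0] by (simp add: zero_enat_def)

lemma tau_shift:
  assumes "tau M W 1 = enat t"
  shows "tau M W (Suc j) = enat t + tau (shiftM t M) W j"
proof (induction j)
  case 0 then show ?case using assms by simp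
next
  case (Suc j)
  show ?case
  proof (cases "tau (shiftM t M) W j")
    case (enat s)
    have "tau M W (Suc (Suc j)) = first M W (t + s)" using Suc enat by (simp add: tau_Suc'[of M W "Suc j"])
    also have "\<dots> = enat t + first (shiftM t M) W s" by (rule first_shift)
    also have "\<dots> = enat t + tau (shiftM t M) W (Suc j)" using enat by (simp add: tau_Suc')
    finally show ?thesis .
  next
    case infinity
    then show ?thesis using Suc by (simp add: tau_Suc'[of M W "Suc j"] tau_Suc'[of "shiftM t M" W j])
  qed
qed

lemma tau_inf_mono: "tau M W j = \<infinity> \<Longrightarrow> tau M W (Suc j) = \<infinity>"
  by (simp add: tau_Suc')

lemma tau_fin_le: "tau M W j \<noteq> \<infinity> \<Longrightarrow> i \<le> j \<Longrightarrow> tau M W i \<noteq> \<infinity>"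
proof (induction j)
  case 0 then show ?case by simp
next
  case (Suc j) then show ?case by (metis le_SucE tau_inf_mono)
qed

lemma mprod_shift: "mprod f (t + a) c = mprod (\<lambda>k. f (t + k)) a c"
  by (induction c) (simp_all add: add.assoc)

lemma mprod_cong: "(\<And>k. a \<le> k \<Longrightarrow> k < a + c \<Longrightarrow> f k = g k) \<Longrightarrow> mprod f a c = mprod g a c"
  by (induction c) auto

lemma enat_add_diff: "(enat t + x) - (enat t + y) = x - y"
  by (cases x; cases y) auto

lemma D_shift:
  assumes "tau M W 1 = enat t"
  shows "tau M W (Suc (Suc j)) - tau M W (Suc j) = tau (shiftM t M) W (Suc j) - tau (shiftM t M) W j"
  using tau_shift[OF assms, of "Suc j"] tau_shift[OF assms, of j] by (simp add: enat_add_diff)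

lemma gamma_shift:
  assumes "tau M W 1 = enat t"
  shows "gamma M W (Suc (Suc j)) = gamma (shiftM t M) W (Suc j)"
proof -
  have A: "tau M W (Suc j) = enat t + tau (shiftM t M) W j" by (rule tau_shift[OF assms])
  have B: "tau M W (Suc (Suc j)) = enat t + tau (shiftM t M) W (Suc j)" by (rule tau_shift[OF assms])
  show ?thesis
  proof (cases "tau (shiftM t M) W j"; cases "tau (shiftM t M) W (Suc j)")
    fix a b assume a: "tau (shiftM t M) W j = enat a" and b: "tau (shiftM t M) W (Suc j) = enat b"
    have "mprod (\<lambda>k. mat 1 - projmat (colspace (M k))) (t + (a + 1)) (t + b - (t + a))
        = mprod (\<lambda>k. mat 1 - projmat (colspace (shiftM t M k))) (a + 1) (b - a)"
      using mprod_shift[of "\<lambda>k. mat 1 - projmat (colspace (M k))" t "a + 1" "b - a"]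
      by (simp add: shiftM_def add.assoc)
    then show ?thesis using A B a b by (simp add: gamma_def add.assoc)
  qed (use A B in \<open>simp_all add: gamma_def\<close>)
qed

lemma covers_cong: "(\<And>k. t + 1 \<le> k \<Longrightarrow> k \<le> j \<Longrightarrow> M k = M' k) \<Longrightarrow> covers M W t j = covers M' W t j"
  unfolding covers_def by (metis (no_types, lifting) atLeastAtMost_iff SUP_cong)

lemma first_cong:
  assumes "\<And>k. k \<ge> 1 \<Longrightarrow> M k = M' k"
  shows "first M W t = first M' W t"
proof -
  have "covers M W t j = covers M' W t j" for j using assms by (intro covers_cong) auto
  then show ?thesis by (simp add: first_def)
qed

lemma tau_cong0:
  assumes "\<And>k. k \<ge> 1 \<Longrightarrow> M k = M' k"
  shows "tau M W j = tau M' W j"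
proof (induction j)
  case 0 then show ?case by simp
next
  case (Suc j)
  have "first M W t = first M' W t" for t using assms by (rule first_cong)
  then show ?case using Suc.IH by (simp add: tau_Suc' split: enat.split)
qed

lemma gamma_cong0:
  assumes "\<And>k. k \<ge> 1 \<Longrightarrow> M k = M' k"
  shows "gamma M W j = gamma M' W j"
proof -
  have m: "mprod (\<lambda>k. mat 1 - projmat (colspace (M k))) (a + 1) c = mprod (\<lambda>k. mat 1 - projmat (colspace (M' k))) (a + 1) c" for a c
    using assms by (intro mprod_cong) auto
  have t: "tau M W i = tau M' W i" for i by (rule tau_cong0[OF assms])
  show ?thesis unfolding gamma_def by (simp only: t m)
qed

lemma first_enat_iff:
  "first M W t = enat d \<longleftrightarrow> t < d \<and> covers M W t d \<and> (\<forall>j\<in>{t<..<d}. \<not> covers M W t j)"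
proof
  assume A: "first M W t = enat d"
  then have ex: "\<exists>j>t. covers M W t j" by (auto simp: first_def split: if_splits)
  then have d: "d = (LEAST j. t < j \<and> covers M W t j)" using A by (simp add: first_def)
  have "t < d \<and> covers M W t d" unfolding d using ex by (metis (mono_tags, lifting) LeastI)
  moreover have "\<forall>j\<in>{t<..<d}. \<not> covers M W t j"
  proof
    fix j assume j: "j \<in> {t<..<d}"
    then have "j < (LEAST j. t < j \<and> covers M W t j)" using d by simp
    then have "\<not> (t < j \<and> covers M W t j)" by (rule not_less_Least)
    then show "\<not> covers M W t j" using j by simp
  qed
  ultimately show "t < d \<and> covers M W t d \<and> (\<forall>j\<in>{t<..<d}. \<not> covers M W t j)" by blast
next
  assume A: "t < d \<and> covers M W t d \<and> (\<forall>j\<in>{t<..<d}. \<not> covers M W t j)"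
  then have ex: "\<exists>j>t. covers M W t j" by auto
  have "(LEAST j. t < j \<and> covers M W t j) = d"
    by (rule Least_equality) (use A in \<open>auto simp: not_less[symmetric]\<close>)
  then show "first M W t = enat d" using ex by (simp add: first_def)
qed

lemma first_inf_iff: "first M W t = \<infinity> \<longleftrightarrow> (\<forall>j>t. \<not> covers M W t j)"
  by (simp add: first_def)

lemma tau1_local:
  assumes T: "tau M W 1 = enat d" and E: "\<And>k. 1 \<le> k \<Longrightarrow> k \<le> d \<Longrightarrow> M' k = M k"
  shows "tau M' W 1 = enat d \<and> gamma M' W 1 = gamma M W 1"
proof -
  have F: "first M W 0 = enat d" using T tau_one by metis
  have cv: "covers M' W 0 j = covers M W 0 j" if "j \<le> d" for j
    using that E by (intro covers_cong) auto
  have "first M' W 0 = enat d" using F cv unfolding first_enat_iff by auto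
  then have T': "tau M' W 1 = enat d" using tau_one by metis
  have m: "mprod (\<lambda>k. mat 1 - projmat (colspace (M' k))) 1 d = mprod (\<lambda>k. mat 1 - projmat (colspace (M k))) 1 d"
    using E by (intro mprod_cong) auto
  have "gamma M' W 1 = gamma M W 1" using T T' m by (simp add: gamma_def zero_enat_def)
  then show ?thesis using T' by simp
qed




lemma meas_first:
  fixes Mz :: "nat \<Rightarrow> 'a \<Rightarrow> real^'c^'r" and W :: "real^'d^'r"
  assumes Mz: "\<And>k. Mz k \<in> borel_measurable N"
  shows "(\<lambda>z. first (\<lambda>k. Mz k z) W t) \<in> measurable N (count_space UNIV)"
  unfolding measurable_count_space_eq2_countable
proof (intro conjI ballI)
  show "(\<lambda>z. first (\<lambda>k. Mz k z) W t) \<in> space N \<rightarrow> UNIV" by simp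
  fix a :: enat
  have pc: "\<And>j. Measurable.pred N (\<lambda>z. covers (\<lambda>k. Mz k z) W t j)" by (rule pred_covers[where Mz=Mz, OF Mz])
  show "(\<lambda>z. first (\<lambda>k. Mz k z) W t) -` {a} \<inter> space N \<in> sets N"
  proof (cases a)
    case (enat d)
    show ?thesis
    proof (cases "t < d")
      case True
      have "Measurable.pred N (\<lambda>z. covers (\<lambda>k. Mz k z) W t d \<and> (\<forall>j\<in>{t<..<d}. \<not> covers (\<lambda>k. Mz k z) W t j))"
        by (intro pred_intros_logic pred_intros_finite(3) pc) auto
      moreover have "(\<lambda>z. first (\<lambda>k. Mz k z) W t) -` {a} \<inter> space N = {z \<in> space N. covers (\<lambda>k. Mz k z) W t d \<and> (\<forall>j\<in>{t<..<d}. \<not> covers (\<lambda>k. Mz k z) W t j)}"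
        using True by (auto simp: enat first_enat_iff)
      ultimately show ?thesis unfolding pred_def by simp
    next
      case False
      then have "(\<lambda>z. first (\<lambda>k. Mz k z) W t) -` {a} \<inter> space N = {}"
        by (auto simp: enat first_enat_iff)
      then show ?thesis by simp
    qed
  next
    case infinity
    have "Measurable.pred N (\<lambda>z. \<forall>j\<in>{t<..}. \<not> covers (\<lambda>k. Mz k z) W t j)"
      by (intro pred_intros_logic pred_intros_countable_bounded(3) pc)
    moreover have "(\<lambda>z. first (\<lambda>k. Mz k z) W t) -` {a} \<inter> space N = {z \<in> space N. \<forall>j\<in>{t<..}. \<not> covers (\<lambda>k. Mz k z) W t j}"
      by (auto simp: infinity first_inf_iff)
    ultimately show ?thesis unfolding pred_def by simp
  qed
qed

lemma meas_tau:
  fixes Mz :: "nat \<Rightarrow> 'a \<Rightarrow> real^'c^'r" and W :: "real^'d^'r"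
  assumes Mz: "\<And>k. Mz k \<in> borel_measurable N"
  shows "(\<lambda>z. tau (\<lambda>k. Mz k z) W j) \<in> measurable N (count_space UNIV)"
proof (induction j)
  case 0 then show ?case by simp
next
  case (Suc j)
  have "(\<lambda>z. (\<lambda>e z. case e of enat t \<Rightarrow> first (\<lambda>k. Mz k z) W t | \<infinity> \<Rightarrow> \<infinity>) (tau (\<lambda>k. Mz k z) W j) z)
      \<in> measurable N (count_space UNIV)"
  proof (rule measurable_compose_countable[OF _ Suc.IH])
    fix e :: enat
    show "(\<lambda>z. case e of enat t \<Rightarrow> first (\<lambda>k. Mz k z) W t | \<infinity> \<Rightarrow> \<infinity>) \<in> measurable N (count_space UNIV)"
      by (cases e) (simp_all add: meas_first[where Mz=Mz, OF Mz])
  qed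
  then show ?case by (simp add: tau_Suc')
qed

lemma meas_mprod:
  fixes Mz :: "nat \<Rightarrow> 'a \<Rightarrow> real^'c^'r"
  assumes Mz: "\<And>k. Mz k \<in> borel_measurable N"
  shows "(\<lambda>z. mprod (\<lambda>k. mat 1 - projmat (colspace (Mz k z))) a c) \<in> borel_measurable N"
proof (induction c)
  case 0 then show ?case by simp
next
  case (Suc c)
  have "(\<lambda>z. mat 1 - projmat (colspace (Mz (a + c) z))) \<in> borel_measurable N"
    by (intro borel_measurable_diff borel_measurable_const meas_projmat Mz)
  then show ?case using Suc.IH by (simp add: meas_mm)
qed

lemma gamma_alt: "gamma M W j = (case tau M W (j - 1) of enat a \<Rightarrow> (case tau M W j of enat b \<Rightarrow>
   opnorm_on (colspace W) (mprod (\<lambda>k. mat 1 - projmat (colspace (M k))) (a + 1) (b - a)) | \<infinity> \<Rightarrow> 0) | \<infinity> \<Rightarrow> 0)"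
  by (simp add: gamma_def split: enat.split)

lemma meas_gamma:
  fixes Mz :: "nat \<Rightarrow> 'a \<Rightarrow> real^'c^'r" and W :: "real^'d^'r"
  assumes Mz: "\<And>k. Mz k \<in> borel_measurable N"
  shows "(\<lambda>z. gamma (\<lambda>k. Mz k z) W j) \<in> borel_measurable N"
proof -
  have G: "(\<lambda>z. opnorm_on (colspace W) (mprod (\<lambda>k. mat 1 - projmat (colspace (Mz k z))) (a + 1) (b - a))) \<in> borel_measurable N" for a b
    using measurable_compose[OF meas_mprod[where Mz=Mz, OF Mz] meas_opnorm[OF zero_colspace]] by simp
  have inner: "(\<lambda>z. case tau (\<lambda>k. Mz k z) W j of enat b \<Rightarrow>
      opnorm_on (colspace W) (mprod (\<lambda>k. mat 1 - projmat (colspace (Mz k z))) (a + 1) (b - a)) | \<infinity> \<Rightarrow> 0)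
     \<in> borel_measurable N" for a
  proof -
    have "(\<lambda>z. (\<lambda>e z. case e of enat b \<Rightarrow>
      opnorm_on (colspace W) (mprod (\<lambda>k. mat 1 - projmat (colspace (Mz k z))) (a + 1) (b - a)) | \<infinity> \<Rightarrow> 0) (tau (\<lambda>k. Mz k z) W j) z)
     \<in> borel_measurable N"
    proof (rule measurable_compose_countable[OF _ meas_tau[where Mz=Mz, OF Mz]])
      fix e :: enat show "(\<lambda>z. case e of enat b \<Rightarrow>
        opnorm_on (colspace W) (mprod (\<lambda>k. mat 1 - projmat (colspace (Mz k z))) (a + 1) (b - a)) | \<infinity> \<Rightarrow> 0) \<in> borel_measurable N"
        by (cases e) (simp_all add: G[simplified])
    qed
    then show ?thesis by simp
  qed
  have "(\<lambda>z. (\<lambda>e z. case e of enat a \<Rightarrow> (case tau (\<lambda>k. Mz k z) W j of enat b \<Rightarrow>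
      opnorm_on (colspace W) (mprod (\<lambda>k. mat 1 - projmat (colspace (Mz k z))) (a + 1) (b - a)) | \<infinity> \<Rightarrow> 0) | \<infinity> \<Rightarrow> 0)
      (tau (\<lambda>k. Mz k z) W (j - 1)) z) \<in> borel_measurable N"
  proof (rule measurable_compose_countable[OF _ meas_tau[where Mz=Mz, OF Mz]])
    fix e :: enat show "(\<lambda>z. case e of enat a \<Rightarrow> (case tau (\<lambda>k. Mz k z) W j of enat b \<Rightarrow>
      opnorm_on (colspace W) (mprod (\<lambda>k. mat 1 - projmat (colspace (Mz k z))) (a + 1) (b - a)) | \<infinity> \<Rightarrow> 0) | \<infinity> \<Rightarrow> 0)
      \<in> borel_measurable N"
      by (cases e) (simp_all add: inner)
  qed
  then show ?thesis by (simp add: gamma_alt)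
qed

lemma meas_D:
  fixes Mz :: "nat \<Rightarrow> 'a \<Rightarrow> real^'c^'r" and W :: "real^'d^'r"
  assumes Mz: "\<And>k. Mz k \<in> borel_measurable N"
  shows "(\<lambda>z. tau (\<lambda>k. Mz k z) W j - tau (\<lambda>k. Mz k z) W i) \<in> measurable N (count_space UNIV)"
proof -
  have "(\<lambda>z. (\<lambda>e z. tau (\<lambda>k. Mz k z) W j - e) (tau (\<lambda>k. Mz k z) W i) z) \<in> measurable N (count_space UNIV)"
  proof (rule measurable_compose_countable[OF _ meas_tau[where Mz=Mz, OF Mz]])
    fix e :: enat
    show "(\<lambda>z. tau (\<lambda>k. Mz k z) W j - e) \<in> measurable N (count_space UNIV)"
      using measurable_compose[OF meas_tau[where Mz=Mz and W=W and j=j, OF Mz] measurable_count_space[of "\<lambda>x. x - e"]] by simp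
  qed
  then show ?thesis by simp
qed




definition Mof :: "real^'n^'m \<Rightarrow> (nat \<Rightarrow> real^'p^'n) \<Rightarrow> nat \<Rightarrow> real^'p^'m" where
  "Mof W x = (\<lambda>k. W ** x (k - 1))"

definition Psi :: "real^'n^'m \<Rightarrow> nat \<Rightarrow> (nat \<Rightarrow> real^'p^'n) \<Rightarrow> enat \<times> real" where
  "Psi W j x = (tau (Mof W x) W j - tau (Mof W x) W (j - 1), gamma (Mof W x) W j)"

lemma Psi_shift:
  assumes T: "tau (Mof W x) W 1 = enat d"
  shows "Psi W (Suc (Suc j)) x = Psi W (Suc j) (\<lambda>k. x (d + k))"
proof -
  have E: "shiftM d (Mof W x) k = Mof W (\<lambda>k. x (d + k)) k" if "k \<ge> 1" for k
    using that by (simp add: shiftM_def Mof_def)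
  have t: "tau (shiftM d (Mof W x)) W i = tau (Mof W (\<lambda>k. x (d + k))) W i" for i
    using E by (intro tau_cong0) auto
  have g: "gamma (shiftM d (Mof W x)) W i = gamma (Mof W (\<lambda>k. x (d + k))) W i" for i
    using E by (intro gamma_cong0) auto
  show ?thesis unfolding Psi_def using D_shift[OF T, of j] gamma_shift[OF T, of j] t g by simp
qed

lemma Psi1_comb:
  "tau (Mof W (comb_seq d \<omega> \<omega>')) W 1 = enat d \<longleftrightarrow> tau (Mof W \<omega>) W 1 = enat d"
  "tau (Mof W \<omega>) W 1 = enat d \<Longrightarrow> Psi W 1 (comb_seq d \<omega> \<omega>') = Psi W 1 \<omega>"
proof -
  have E: "Mof W (comb_seq d \<omega> \<omega>') k = Mof W \<omega> k" if "1 \<le> k" "k \<le> d" for k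
    using that by (simp add: Mof_def comb_seq_less)
  show "tau (Mof W (comb_seq d \<omega> \<omega>')) W 1 = enat d \<longleftrightarrow> tau (Mof W \<omega>) W 1 = enat d"
    using tau1_local[of "Mof W \<omega>" W d "Mof W (comb_seq d \<omega> \<omega>')"]
      tau1_local[of "Mof W (comb_seq d \<omega> \<omega>')" W d "Mof W \<omega>"] E by auto
  assume "tau (Mof W \<omega>) W 1 = enat d"
  then show "Psi W 1 (comb_seq d \<omega> \<omega>') = Psi W 1 \<omega>"
    using tau1_local[of "Mof W \<omega>" W d "Mof W (comb_seq d \<omega> \<omega>')"] E by (simp add: Psi_def)
qed

lemma comb_shift: "(\<lambda>k. comb_seq d \<omega> \<omega>' (d + k)) = \<omega>'"
  by (simp add: comb_seq_def)

lemma meas_Mof: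
  fixes x :: "'a \<Rightarrow> nat \<Rightarrow> real^'p^'n" and W :: "real^'n^'m"
  assumes "\<And>k. (\<lambda>z. x z k) \<in> borel_measurable N"
  shows "(\<lambda>z. Mof W (x z) k) \<in> borel_measurable N"
  unfolding Mof_def by (intro meas_mm borel_measurable_const assms)

lemma meas_Psi:
  fixes x :: "'a \<Rightarrow> nat \<Rightarrow> real^'p^'n" and W :: "real^'n^'m"
  assumes "\<And>k. (\<lambda>z. x z k) \<in> borel_measurable N"
  shows "(\<lambda>z. Psi W j (x z)) \<in> measurable N (count_space UNIV \<Otimes>\<^sub>M borel)"
    and "(\<lambda>z. tau (Mof W (x z)) W j) \<in> measurable N (count_space UNIV)"
proof -
  have Mz: "\<And>k. (\<lambda>z. Mof W (x z) k) \<in> borel_measurable N" by (rule meas_Mof[OF assms])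
  show "(\<lambda>z. Psi W j (x z)) \<in> measurable N (count_space UNIV \<Otimes>\<^sub>M borel)"
    unfolding Psi_def
    by (intro measurable_Pair meas_D[where Mz="\<lambda>k z. Mof W (x z) k", OF Mz]
         meas_gamma[where Mz="\<lambda>k z. Mof W (x z) k", OF Mz])
  show "(\<lambda>z. tau (Mof W (x z)) W j) \<in> measurable N (count_space UNIV)"
    using meas_tau[where Mz="\<lambda>k z. Mof W (x z) k" and W=W and j=j, OF Mz] by simp
qed




lemma ball_Suc_split: "(\<forall>j\<in>{1..Suc n}. P j) \<longleftrightarrow> P 1 \<and> (\<forall>j\<in>{1..n}. P (Suc j))"
proof
  assume "\<forall>j\<in>{1..Suc n}. P j" then show "P 1 \<and> (\<forall>j\<in>{1..n}. P (Suc j))" by auto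
next
  assume A: "P 1 \<and> (\<forall>j\<in>{1..n}. P (Suc j))"
  show "\<forall>j\<in>{1..Suc n}. P j"
  proof
    fix j assume j: "j \<in> {1..Suc n}"
    show "P j"
    proof (cases "j = 1")
      case True then show ?thesis using A by simp
    next
      case False
      then have "j - 1 \<in> {1..n}" "Suc (j - 1) = j" using j by auto
      then show ?thesis using A by metis
    qed
  qed
qed

lemma ball_Suc_split': "(\<forall>j\<in>{Suc 0..Suc n}. P j) \<longleftrightarrow> P (Suc 0) \<and> (\<forall>j\<in>{Suc 0..n}. P (Suc j))"
  using ball_Suc_split[of n P] by simp

lemma prod_split1: "(\<Prod>j\<in>{1..Suc n}. f j) = (f 1 :: 'a::comm_monoid_mult) * (\<Prod>j\<in>{1..n}. f (Suc j))"
proof -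
  have "(\<Prod>j\<in>{1..Suc n}. f j) = f 1 * (\<Prod>j\<in>{Suc 1..Suc n}. f j)" by (rule prod.atLeast_Suc_atMost) simp
  also have "(\<Prod>j\<in>{Suc 1..Suc n}. f j) = (\<Prod>j\<in>{1..n}. f (Suc j))" by (rule prod.shift_bounds_cl_Suc_ivl)
  finally show ?thesis .
qed

lemma main_seq:
  fixes \<mu> :: "(real^'p^'n) measure" and W :: "real^'n^'m"
  assumes Q: "sequence_space \<mu>" and setsM: "sets \<mu> = sets borel"
  shows "1 \<le> n \<Longrightarrow> (AE x in PiM UNIV (\<lambda>_. \<mu>). tau (Mof W x) W (n - 1) \<noteq> \<infinity>) \<Longrightarrow>
     (\<And>j. A j \<in> sets (count_space UNIV \<Otimes>\<^sub>M borel)) \<Longrightarrow>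
     emeasure (PiM UNIV (\<lambda>_. \<mu>)) {x \<in> space (PiM UNIV (\<lambda>_. \<mu>)). \<forall>j\<in>{1..n}. Psi W j x \<in> A j}
     = (\<Prod>j\<in>{1..n}. emeasure (PiM UNIV (\<lambda>_. \<mu>)) {x \<in> space (PiM UNIV (\<lambda>_. \<mu>)). Psi W 1 x \<in> A j})"
proof (induction n arbitrary: A)
  case 0 then show ?case by simp
next
  case (Suc n)
  interpret Q: sequence_space \<mu> by (rule Q)
  define \<Omega> where "\<Omega> = PiM UNIV (\<lambda>_::nat. \<mu>)"
  have spaceO: "space \<Omega> = UNIV"
    by (simp add: \<Omega>_def space_PiM sets_eq_imp_space_eq[OF setsM])
  have comp: "(\<lambda>x. x k) \<in> borel_measurable \<Omega>" for k
  proof -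
    have "(\<lambda>x. x k) \<in> measurable \<Omega> \<mu>" unfolding \<Omega>_def by (rule measurable_component_singleton) simp
    then show ?thesis using measurable_cong_sets[OF refl setsM, of \<Omega>] by simp
  qed
  have [measurable]: "(\<lambda>x. Psi W j x) \<in> measurable \<Omega> (count_space UNIV \<Otimes>\<^sub>M borel)" for j
    using meas_Psi(1)[where x="\<lambda>x. x" and N=\<Omega> and W=W and j=j, OF comp] by simp
  have Tm[measurable]: "(\<lambda>x. tau (Mof W x) W j) \<in> measurable \<Omega> (count_space UNIV)" for j
    using meas_Psi(2)[where x="\<lambda>x. x" and N=\<Omega> and W=W and j=j, OF comp] by simp
  have [measurable]: "A j \<in> sets (count_space UNIV \<Otimes>\<^sub>M borel)" for j by (rule Suc.prems(3))
  show ?case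
  proof (cases "n = 0")
    case True then show ?thesis by simp
  next
    case False
    note AEn = Suc.prems(2)[folded \<Omega>_def]
    have AE1: "AE x in \<Omega>. tau (Mof W x) W 1 \<noteq> \<infinity>"
      using AEn
    proof eventually_elim
      case (elim x) show ?case using tau_fin_le[OF elim, of 1] False by simp
    qed
    have AEn1: "AE x in \<Omega>. tau (Mof W x) W (n - 1) \<noteq> \<infinity>"
      using AEn
    proof eventually_elim
      case (elim x) show ?case using tau_fin_le[OF elim, of "n - 1"] by simp
    qed
    let ?T = "\<lambda>x. tau (Mof W x) W 1"
    define E where "E = {x \<in> space \<Omega>. \<forall>j\<in>{1..Suc n}. Psi W j x \<in> A j}"
    define Ed where "Ed d = {x \<in> space \<Omega>. ?T x = enat d \<and> (\<forall>j\<in>{1..Suc n}. Psi W j x \<in> A j)}" for d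
    define Bd where "Bd d = {x \<in> space \<Omega>. ?T x = enat d \<and> Psi W 1 x \<in> A 1}" for d
    define C where "C = {x \<in> space \<Omega>. \<forall>j\<in>{1..n}. Psi W j x \<in> A (Suc j)}"
    have [measurable]: "E \<in> sets \<Omega>" "Ed d \<in> sets \<Omega>" "Bd d \<in> sets \<Omega>" "C \<in> sets \<Omega>" for d
      unfolding E_def Ed_def Bd_def C_def by measurable
    have IH: "emeasure \<Omega> C = (\<Prod>j\<in>{1..n}. emeasure \<Omega> {x \<in> space \<Omega>. Psi W 1 x \<in> A (Suc j)})"
      unfolding C_def \<Omega>_def
      by (rule Suc.IH) (use False AEn1[unfolded \<Omega>_def] Suc.prems(3) in auto)
    have "emeasure \<Omega> E = emeasure \<Omega> (\<Union>d. Ed d)"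
    proof (rule emeasure_eq_AE)
      show "AE x in \<Omega>. (x \<in> E) = (x \<in> (\<Union>d. Ed d))"
        using AE1 by eventually_elim (auto simp: E_def Ed_def)
    qed auto
    also have "\<dots> = (\<Sum>d. emeasure \<Omega> (Ed d))"
      by (rule suminf_emeasure[symmetric]) (auto simp: disjoint_family_on_def Ed_def)
    also have "\<dots> = (\<Sum>d. emeasure \<Omega> (Bd d) * emeasure \<Omega> C)"
    proof (rule suminf_cong)
      fix d
      have D: "distr (\<Omega> \<Otimes>\<^sub>M \<Omega>) \<Omega> (\<lambda>(\<omega>, \<omega>'). comb_seq d \<omega> \<omega>') = \<Omega>"
        unfolding \<Omega>_def by (rule Q.PiM_comb_seq)
      have pre: "(\<lambda>(\<omega>, \<omega>'). comb_seq d \<omega> \<omega>') -` Ed d \<inter> space (\<Omega> \<Otimes>\<^sub>M \<Omega>) = Bd d \<times> C"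
      proof (intro set_eqI iffI)
        fix p assume "p \<in> (\<lambda>(\<omega>, \<omega>'). comb_seq d \<omega> \<omega>') -` Ed d \<inter> space (\<Omega> \<Otimes>\<^sub>M \<Omega>)"
        then obtain \<omega> \<omega>' where p: "p = (\<omega>, \<omega>')" and x: "comb_seq d \<omega> \<omega>' \<in> Ed d" by (cases p) auto
        have T: "?T (comb_seq d \<omega> \<omega>') = enat d" using x by (simp add: Ed_def)
        have T\<omega>: "?T \<omega> = enat d" using T Psi1_comb(1) by metis
        have P1: "Psi W 1 \<omega> \<in> A 1" using x Psi1_comb(2)[OF T\<omega>, of \<omega>'] by (simp add: Ed_def ball_Suc_split ball_Suc_split')
        have "Psi W j \<omega>' \<in> A (Suc j)" if jn: "j \<in> {1..n}" for j
        proof -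
          obtain j' where j: "j = Suc j'" using jn by (cases j) auto
          have "Psi W (Suc j) (comb_seq d \<omega> \<omega>') \<in> A (Suc j)" using x jn by (simp add: Ed_def ball_Suc_split ball_Suc_split')
          then show ?thesis using Psi_shift[OF T, of j'] by (simp add: j comb_shift)
        qed
        then show "p \<in> Bd d \<times> C" using p T\<omega> P1 by (simp add: Bd_def C_def spaceO)
      next
        fix p assume "p \<in> Bd d \<times> C"
        then obtain \<omega> \<omega>' where p: "p = (\<omega>, \<omega>')" and B: "\<omega> \<in> Bd d" and Cc: "\<omega>' \<in> C" by auto
        have T\<omega>: "?T \<omega> = enat d" using B by (simp add: Bd_def)
        have T: "?T (comb_seq d \<omega> \<omega>') = enat d" using T\<omega> Psi1_comb(1) by metis
        have P1: "Psi W 1 (comb_seq d \<omega> \<omega>') \<in> A 1" using B Psi1_comb(2)[OF T\<omega>, of \<omega>'] by (simp add: Bd_def)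
        have "Psi W (Suc j) (comb_seq d \<omega> \<omega>') \<in> A (Suc j)" if jn: "j \<in> {1..n}" for j
        proof -
          obtain j' where j: "j = Suc j'" using jn by (cases j) auto
          have "Psi W j \<omega>' \<in> A (Suc j)" using Cc jn by (simp add: C_def)
          then show ?thesis using Psi_shift[OF T, of j'] by (simp add: j comb_shift)
        qed
        then show "p \<in> (\<lambda>(\<omega>, \<omega>'). comb_seq d \<omega> \<omega>') -` Ed d \<inter> space (\<Omega> \<Otimes>\<^sub>M \<Omega>)"
          using p T P1 by (simp add: Ed_def ball_Suc_split ball_Suc_split' spaceO space_pair_measure)
      qed
      have "emeasure \<Omega> (Ed d) = emeasure (distr (\<Omega> \<Otimes>\<^sub>M \<Omega>) \<Omega> (\<lambda>(\<omega>, \<omega>'). comb_seq d \<omega> \<omega>')) (Ed d)"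
        using D by simp
      also have "\<dots> = emeasure (\<Omega> \<Otimes>\<^sub>M \<Omega>) ((\<lambda>(\<omega>, \<omega>'). comb_seq d \<omega> \<omega>') -` Ed d \<inter> space (\<Omega> \<Otimes>\<^sub>M \<Omega>))"
      proof (rule emeasure_distr)
        show "(\<lambda>(\<omega>, \<omega>'). comb_seq d \<omega> \<omega>') \<in> measurable (\<Omega> \<Otimes>\<^sub>M \<Omega>) \<Omega>"
          unfolding \<Omega>_def by (rule measurable_comb_seq)
      qed simp
      also have "\<dots> = emeasure (\<Omega> \<Otimes>\<^sub>M \<Omega>) (Bd d \<times> C)" by (simp only: pre)
      also have "\<dots> = emeasure \<Omega> (Bd d) * emeasure \<Omega> C"
        unfolding \<Omega>_def by (rule Q.P.emeasure_pair_measure_Times) (auto simp flip: \<Omega>_def)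
      finally show "emeasure \<Omega> (Ed d) = emeasure \<Omega> (Bd d) * emeasure \<Omega> C" .
    qed
    also have "\<dots> = (\<Sum>d. emeasure \<Omega> (Bd d)) * emeasure \<Omega> C" by simp
    also have "(\<Sum>d. emeasure \<Omega> (Bd d)) = emeasure \<Omega> (\<Union>d. Bd d)"
      by (rule suminf_emeasure) (auto simp: disjoint_family_on_def Bd_def)
    also have "\<dots> = emeasure \<Omega> {x \<in> space \<Omega>. Psi W 1 x \<in> A 1}"
    proof (rule emeasure_eq_AE)
      show "AE x in \<Omega>. (x \<in> (\<Union>d. Bd d)) = (x \<in> {x \<in> space \<Omega>. Psi W 1 x \<in> A 1})"
        using AE1 by eventually_elim (auto simp: Bd_def)
    qed auto
    finally have "emeasure \<Omega> E = emeasure \<Omega> {x \<in> space \<Omega>. Psi W 1 x \<in> A 1} *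
        (\<Prod>j\<in>{1..n}. emeasure \<Omega> {x \<in> space \<Omega>. Psi W 1 x \<in> A (Suc j)})"
      using IH by simp
    also have "\<dots> = (\<Prod>j\<in>{1..Suc n}. emeasure \<Omega> {x \<in> space \<Omega>. Psi W 1 x \<in> A j})"
      by (simp only: prod_split1)
    finally show ?thesis by (simp add: E_def \<Omega>_def)
  qed
qed




lemma seq_law:
  fixes M :: "'w measure" and S :: "nat \<Rightarrow> 'w \<Rightarrow> real^'p^'n"
  assumes P: "prob_space M" and ind: "prob_space.indep_vars M (\<lambda>_. borel) S UNIV"
    and dist: "\<And>k. distr M borel (S k) = distr M borel (S 0)"
  shows "sequence_space (distr M borel (S 0))"
    and "distr M (PiM UNIV (\<lambda>_. distr M borel (S 0))) (\<lambda>\<omega> k. S (Suc k) \<omega>) = PiM UNIV (\<lambda>_. distr M borel (S 0))"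
proof -
  interpret prob_space M by (rule P)
  let ?\<mu> = "distr M borel (S 0)"
  have rv: "random_variable borel (S k)" for k using ind by (simp add: indep_vars_def2)
  have P\<mu>: "prob_space ?\<mu>" by (rule prob_space_distr[OF rv])
  show Q: "sequence_space ?\<mu>"
    unfolding sequence_space_def product_prob_space_def product_prob_space_axioms_def product_sigma_finite_def
    using P\<mu> by (simp add: prob_space_imp_sigma_finite)
  interpret Q: sequence_space ?\<mu> by (rule Q)
  have space\<mu>: "space ?\<mu> = UNIV" by simp
  have Xs: "(\<lambda>\<omega> k. S (Suc k) \<omega>) \<in> measurable M (PiM UNIV (\<lambda>_. ?\<mu>))"
  proof (rule measurable_PiM_single')
    fix i :: nat show "S (Suc i) \<in> measurable M ?\<mu>" using rv[of "Suc i"] by simp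
  qed (simp add: space\<mu>)
  show "distr M (PiM UNIV (\<lambda>_. ?\<mu>)) (\<lambda>\<omega> k. S (Suc k) \<omega>) = PiM UNIV (\<lambda>_. ?\<mu>)"
  proof (rule Q.PiM_eq)
    fix J :: "nat set" and F assume J: "finite J" "J \<subseteq> UNIV" and F: "\<And>j. j \<in> J \<Longrightarrow> F j \<in> sets ?\<mu>"
    have Fs: "F j \<in> sets borel" if "j \<in> J" for j using F[OF that] by simp
    have set: "prod_emb UNIV (\<lambda>_. ?\<mu>) J (Pi\<^sub>E J F) \<in> sets (PiM UNIV (\<lambda>_. ?\<mu>))"
      using J F by (intro sets_PiM_I) auto
    have pre: "(\<lambda>\<omega> k. S (Suc k) \<omega>) -` prod_emb UNIV (\<lambda>_. ?\<mu>) J (Pi\<^sub>E J F) \<inter> space M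
        = {\<omega> \<in> space M. \<forall>j\<in>J. S (Suc j) \<omega> \<in> F j}"
      by (auto simp: prod_emb_def PiE_iff space\<mu>)
    have Sj: "emeasure M (S (Suc j) -` F j \<inter> space M) = emeasure ?\<mu> (F j)" if "j \<in> J" for j
    proof -
      have "emeasure ?\<mu> (F j) = emeasure (distr M borel (S (Suc j))) (F j)" using dist[of "Suc j"] by simp
      also have "\<dots> = emeasure M (S (Suc j) -` F j \<inter> space M)" using rv Fs[OF that] by (simp add: emeasure_distr)
      finally show ?thesis by simp
    qed
    have "emeasure (distr M (PiM UNIV (\<lambda>_. ?\<mu>)) (\<lambda>\<omega> k. S (Suc k) \<omega>)) (prod_emb UNIV (\<lambda>_. ?\<mu>) J (Pi\<^sub>E J F))
        = emeasure M {\<omega> \<in> space M. \<forall>j\<in>J. S (Suc j) \<omega> \<in> F j}"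
      using emeasure_distr[OF Xs set] pre by simp
    also have "\<dots> = (\<Prod>j\<in>J. emeasure ?\<mu> (F j))"
    proof (cases "J = {}")
      case True then show ?thesis by (simp add: emeasure_space_1)
    next
      case False
      have eq: "{\<omega> \<in> space M. \<forall>j\<in>J. S (Suc j) \<omega> \<in> F j} = (\<Inter>i\<in>Suc ` J. S i -` F (i - 1) \<inter> space M)"
        using False by auto
      have "prob (\<Inter>i\<in>Suc ` J. S i -` F (i - 1) \<inter> space M) = (\<Prod>i\<in>Suc ` J. prob (S i -` F (i - 1) \<inter> space M))"
        using False J Fs by (intro indep_varsD[OF ind]) auto
      also have "\<dots> = (\<Prod>j\<in>J. prob (S (Suc j) -` F j \<inter> space M))" by (simp add: prod.reindex)
      finally have pr: "prob (\<Inter>i\<in>Suc ` J. S i -` F (i - 1) \<inter> space M) = (\<Prod>j\<in>J. prob (S (Suc j) -` F j \<inter> space M))" .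
      have "emeasure M {\<omega> \<in> space M. \<forall>j\<in>J. S (Suc j) \<omega> \<in> F j} = ennreal (\<Prod>j\<in>J. prob (S (Suc j) -` F j \<inter> space M))"
        unfolding eq emeasure_eq_measure pr ..
      also have "\<dots> = (\<Prod>j\<in>J. ennreal (prob (S (Suc j) -` F j \<inter> space M)))"
        by (rule prod_ennreal[symmetric]) simp
      also have "\<dots> = (\<Prod>j\<in>J. emeasure M (S (Suc j) -` F j \<inter> space M))"
        by (simp add: emeasure_eq_measure)
      also have "\<dots> = (\<Prod>j\<in>J. emeasure ?\<mu> (F j))" using Sj by (intro prod.cong) auto
      finally show ?thesis .
    qed
    finally show "emeasure (distr M (PiM UNIV (\<lambda>_. ?\<mu>)) (\<lambda>\<omega> k. S (Suc k) \<omega>)) (prod_emb UNIV (\<lambda>_. ?\<mu>) J (Pi\<^sub>E J F))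
        = (\<Prod>j\<in>J. emeasure ?\<mu> (F j))" .
  qed simp
qed




theorem mainTheorem4:
  fixes M :: "'w measure"
    and A :: "real^'n^'m" and B Bh :: "real^'m^'m"
    and S :: "nat \<Rightarrow> 'w \<Rightarrow> real^'p^'n"
    and l :: nat
  assumes "prob_space M"
    and "sym_pd B" and "sym_pd Bh" and "Bh ** Bh = B"
    and "prob_space.indep_vars M (\<lambda>_. borel) S UNIV"
    and "\<And>k. distr M borel (S k) = distr M borel (S 0)"
    and "l \<ge> 1"
    and "AE \<omega> in M. tau (\<lambda>k. Bh ** A ** S k \<omega>) (Bh ** A) (l - 1) < \<infinity>"
  shows "prob_space.indep_vars M (\<lambda>_. count_space UNIV)
           (\<lambda>j \<omega>. tau (\<lambda>k. Bh ** A ** S k \<omega>) (Bh ** A) j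
                 - tau (\<lambda>k. Bh ** A ** S k \<omega>) (Bh ** A) (j - 1)) {1..l}
    \<and> (\<forall>j\<in>{1..l}.
          distr M (count_space UNIV)
            (\<lambda>\<omega>. tau (\<lambda>k. Bh ** A ** S k \<omega>) (Bh ** A) j
                 - tau (\<lambda>k. Bh ** A ** S k \<omega>) (Bh ** A) (j - 1))
        = distr M (count_space UNIV)
            (\<lambda>\<omega>. tau (\<lambda>k. Bh ** A ** S k \<omega>) (Bh ** A) 1
                 - tau (\<lambda>k. Bh ** A ** S k \<omega>) (Bh ** A) 0))
    \<and> prob_space.indep_vars M (\<lambda>_. borel)
           (\<lambda>j \<omega>. gamma (\<lambda>k. Bh ** A ** S k \<omega>) (Bh ** A) j) {1..l}
    \<and> (\<forall>j\<in>{1..l}.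
          distr M borel (\<lambda>\<omega>. gamma (\<lambda>k. Bh ** A ** S k \<omega>) (Bh ** A) j)
        = distr M borel (\<lambda>\<omega>. gamma (\<lambda>k. Bh ** A ** S k \<omega>) (Bh ** A) 1))"
proof -
  interpret prob_space M by (rule assms(1))
  define \<mu> where "\<mu> = distr M borel (S 0)"
  define \<Omega> where "\<Omega> = PiM UNIV (\<lambda>_::nat. \<mu>)"
  define Xs where "Xs = (\<lambda>\<omega> k. S (Suc k) \<omega>)"
  define W where "W = Bh ** A"
  define N' where "N' = (count_space UNIV \<Otimes>\<^sub>M borel :: (enat \<times> real) measure)"
  have UN': "UNIV \<in> sets N'"
  proof -
    have "space N' \<in> sets N'" by simp
    moreover have "space N' = UNIV" by (simp add: N'_def space_pair_measure)
    ultimately show ?thesis by simp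
  qed
  have Q: "sequence_space \<mu>" using seq_law(1)[OF assms(1,5,6)] by (simp add: \<mu>_def)
  interpret Q: sequence_space \<mu> by (rule Q)
  have law: "distr M \<Omega> Xs = \<Omega>" using seq_law(2)[OF assms(1,5,6)] by (simp add: \<mu>_def \<Omega>_def Xs_def)
  have sets\<mu>: "sets \<mu> = sets borel" by (simp add: \<mu>_def)
  have spaceO: "space \<Omega> = UNIV" by (simp add: \<Omega>_def space_PiM \<mu>_def)
  have PO: "prob_space \<Omega>" unfolding \<Omega>_def by (rule Q.P.prob_space_axioms)
  have comp: "(\<lambda>x. x k) \<in> borel_measurable \<Omega>" for k
  proof -
    have "(\<lambda>x. x k) \<in> measurable \<Omega> \<mu>" unfolding \<Omega>_def by (rule measurable_component_singleton) simp
    then show ?thesis using measurable_cong_sets[OF refl sets\<mu>, of \<Omega>] by simp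
  qed
  have PsiM[measurable]: "(\<lambda>x. Psi W j x) \<in> measurable \<Omega> N'" for j
    using meas_Psi(1)[where x="\<lambda>x. x" and N=\<Omega> and W=W and j=j, OF comp] by (simp add: N'_def)
  have TauM[measurable]: "(\<lambda>x. tau (Mof W x) W j) \<in> measurable \<Omega> (count_space UNIV)" for j
    using meas_Psi(2)[where x="\<lambda>x. x" and N=\<Omega> and W=W and j=j, OF comp] by simp
  have rv: "random_variable borel (S k)" for k using assms(5) by (simp add: indep_vars_def2)
  have XsM: "Xs \<in> measurable M \<Omega>"
    unfolding Xs_def \<Omega>_def
  proof (rule measurable_PiM_single')
    fix i :: nat show "S (Suc i) \<in> measurable M \<mu>" using rv[of "Suc i"] by (simp add: \<mu>_def)
  qed (simp add: \<mu>_def)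
  have Mof_eq: "Mof W (Xs \<omega>) k = Bh ** A ** S k \<omega>" if "k \<ge> 1" for k \<omega>
    using that by (simp add: Mof_def Xs_def W_def)
  have tauX0: "tau (Mof W (Xs \<omega>)) W j = tau (\<lambda>k. Bh ** A ** S k \<omega>) W j" for \<omega> j
    using Mof_eq by (intro tau_cong0) auto
  have tauX: "tau (Mof W (Xs \<omega>)) W j = tau (\<lambda>k. Bh ** A ** S k \<omega>) (Bh ** A) j" for \<omega> j
    using tauX0[unfolded W_def] unfolding W_def .
  have gammaX0: "gamma (Mof W (Xs \<omega>)) W j = gamma (\<lambda>k. Bh ** A ** S k \<omega>) W j" for \<omega> j
    using Mof_eq by (intro gamma_cong0) auto
  have gammaX: "gamma (Mof W (Xs \<omega>)) W j = gamma (\<lambda>k. Bh ** A ** S k \<omega>) (Bh ** A) j" for \<omega> j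
    using gammaX0[unfolded W_def] unfolding W_def .
  have YD: "fst (Psi W j (Xs \<omega>)) = tau (\<lambda>k. Bh ** A ** S k \<omega>) (Bh ** A) j - tau (\<lambda>k. Bh ** A ** S k \<omega>) (Bh ** A) (j - 1)" for j \<omega>
    by (simp add: Psi_def tauX)
  have YG: "snd (Psi W j (Xs \<omega>)) = gamma (\<lambda>k. Bh ** A ** S k \<omega>) (Bh ** A) j" for j \<omega>
    by (simp add: Psi_def gammaX)
  have transfer: "emeasure M {\<omega> \<in> space M. P (Xs \<omega>)} = emeasure \<Omega> {x \<in> space \<Omega>. P x}"
    if "{x \<in> space \<Omega>. P x} \<in> sets \<Omega>" for P
  proof -
    have "emeasure \<Omega> {x \<in> space \<Omega>. P x} = emeasure (distr M \<Omega> Xs) {x \<in> space \<Omega>. P x}" using law by simp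
    also have "\<dots> = emeasure M (Xs -` {x \<in> space \<Omega>. P x} \<inter> space M)" by (rule emeasure_distr[OF XsM that])
    also have "Xs -` {x \<in> space \<Omega>. P x} \<inter> space M = {\<omega> \<in> space M. P (Xs \<omega>)}" by (auto simp: spaceO)
    finally show ?thesis by simp
  qed
  have AE: "AE x in \<Omega>. tau (Mof W x) W (l - 1) \<noteq> \<infinity>"
  proof -
    have ms: "{x \<in> space \<Omega>. tau (Mof W x) W (l - 1) \<noteq> \<infinity>} \<in> sets \<Omega>" by measurable
    have "AE \<omega> in M. tau (Mof W (Xs \<omega>)) W (l - 1) \<noteq> \<infinity>"
      using assms(8) by eventually_elim (simp add: tauX)
    then have "AE x in distr M \<Omega> Xs. tau (Mof W x) W (l - 1) \<noteq> \<infinity>"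
      using AE_distr_iff[OF XsM ms] by simp
    then show ?thesis by (simp only: law)
  qed
  have ms: "emeasure \<Omega> {x \<in> space \<Omega>. \<forall>j\<in>{1..l}. Psi W j x \<in> G j}
     = (\<Prod>j\<in>{1..l}. emeasure \<Omega> {x \<in> space \<Omega>. Psi W 1 x \<in> G j})"
    if "\<And>j. G j \<in> sets N'" for G
    by (rule main_seq[OF Q sets\<mu> assms(7) AE[unfolded \<Omega>_def], folded \<Omega>_def]) (use that in \<open>simp add: N'_def\<close>)
  have same: "emeasure \<Omega> {x \<in> space \<Omega>. Psi W j x \<in> Bs} = emeasure \<Omega> {x \<in> space \<Omega>. Psi W 1 x \<in> Bs}"
    if j: "j \<in> {1..l}" and Bs: "Bs \<in> sets N'" for j Bs
  proof -
    define G where "G i = (if i = j then Bs else UNIV)" for i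
    have G: "G i \<in> sets N'" for i using Bs UN' by (auto simp: G_def)
    have "{x \<in> space \<Omega>. \<forall>i\<in>{1..l}. Psi W i x \<in> G i} = {x \<in> space \<Omega>. Psi W j x \<in> Bs}"
      using j by (auto simp: G_def)
    then have "emeasure \<Omega> {x \<in> space \<Omega>. Psi W j x \<in> Bs} = (\<Prod>i\<in>{1..l}. emeasure \<Omega> {x \<in> space \<Omega>. Psi W 1 x \<in> G i})"
      using ms[of G, OF G] by simp
    also have "\<dots> = (\<Prod>i\<in>{1..l}. if i = j then emeasure \<Omega> {x \<in> space \<Omega>. Psi W 1 x \<in> Bs} else 1)"
      by (intro prod.cong) (auto simp: G_def prob_space.emeasure_space_1[OF PO])
    also have "\<dots> = emeasure \<Omega> {x \<in> space \<Omega>. Psi W 1 x \<in> Bs}" using j by (simp add: prod.delta)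
    finally show ?thesis .
  qed
  define Y where "Y j \<omega> = Psi W j (Xs \<omega>)" for j \<omega>
  have YM: "Y j \<in> measurable M N'" for j
    unfolding Y_def using measurable_compose[OF XsM PsiM[of j]] by simp
  have YE: "emeasure M (Y j -` Bs \<inter> space M) = emeasure \<Omega> {x \<in> space \<Omega>. Psi W j x \<in> Bs}" if "Bs \<in> sets N'" for j Bs
  proof -
    have "{x \<in> space \<Omega>. Psi W j x \<in> Bs} \<in> sets \<Omega>" using that by measurable
    from transfer[OF this] show ?thesis by (simp add: Y_def vimage_def Int_def conj_commute)
  qed
  have lawY: "distr M N' (Y j) = distr M N' (Y 1)" if j: "j \<in> {1..l}" for j
  proof (rule measure_eqI)
    fix Bs assume "Bs \<in> sets (distr M N' (Y j))"
    then have Bs: "Bs \<in> sets N'" by simp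
    show "emeasure (distr M N' (Y j)) Bs = emeasure (distr M N' (Y 1)) Bs"
      using Bs YM by (simp add: emeasure_distr YE same[OF j Bs])
  qed simp
  have indepY: "indep_vars (\<lambda>_. N') Y {1..l}"
  proof (subst indep_vars_finite[where E="\<lambda>_. sets N'"])
    show "{1..l} \<noteq> {}" using assms(7) by simp
    show "finite {1..l::nat}" by simp
    show "sets N' = sigma_sets (space N') (sets N')" for i by (simp add: sets.sigma_sets_eq)
    show "random_variable N' (Y i)" for i by (rule YM)
    show "Int_stable (sets N')" for i by (auto simp: Int_stable_def)
    show "space N' \<in> sets N'" for i by simp
    show "sets N' \<subseteq> Pow (space N')" for i by (rule sets.space_closed)
    show "\<forall>G\<in>{1..l} \<rightarrow> sets N'. prob (\<Inter>j\<in>{1..l}. Y j -` G j \<inter> space M) = (\<Prod>j\<in>{1..l}. prob (Y j -` G j \<inter> space M))"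
    proof
      fix G assume G: "G \<in> {1..l} \<rightarrow> sets N'"
      define G' where "G' j = (if j \<in> {1..l} then G j else UNIV)" for j
      have G': "G' j \<in> sets N'" for j using G UN' by (auto simp: G'_def)
      have eq: "(\<Inter>j\<in>{1..l}. Y j -` G j \<inter> space M) = {\<omega> \<in> space M. \<forall>j\<in>{1..l}. Psi W j (Xs \<omega>) \<in> G' j}"
        using assms(7) by (auto simp: Y_def G'_def)
      have ms2: "{x \<in> space \<Omega>. \<forall>j\<in>{1..l}. Psi W j x \<in> G' j} \<in> sets \<Omega>"
        using G' by measurable
      have "emeasure M (\<Inter>j\<in>{1..l}. Y j -` G j \<inter> space M) = emeasure \<Omega> {x \<in> space \<Omega>. \<forall>j\<in>{1..l}. Psi W j x \<in> G' j}"
        unfolding eq by (rule transfer[OF ms2])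
      also have "\<dots> = (\<Prod>j\<in>{1..l}. emeasure \<Omega> {x \<in> space \<Omega>. Psi W 1 x \<in> G' j})" by (rule ms[of G', OF G'])
      also have "\<dots> = (\<Prod>j\<in>{1..l}. emeasure M (Y j -` G j \<inter> space M))"
      proof (rule prod.cong)
        fix j assume j: "j \<in> {1..l}"
        have "emeasure \<Omega> {x \<in> space \<Omega>. Psi W 1 x \<in> G' j} = emeasure \<Omega> {x \<in> space \<Omega>. Psi W j x \<in> G' j}"
          using same[OF j G'] by simp
        also have "\<dots> = emeasure M (Y j -` G j \<inter> space M)" using YE[of "G' j" j, OF G'] j by (simp add: G'_def)
        finally show "emeasure \<Omega> {x \<in> space \<Omega>. Psi W 1 x \<in> G' j} = emeasure M (Y j -` G j \<inter> space M)" .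
      qed simp
      also have "\<dots> = (\<Prod>j\<in>{1..l}. ennreal (prob (Y j -` G j \<inter> space M)))"
        by (simp add: emeasure_eq_measure)
      also have "\<dots> = ennreal (\<Prod>j\<in>{1..l}. prob (Y j -` G j \<inter> space M))"
        by (rule prod_ennreal) simp
      finally have "ennreal (prob (\<Inter>j\<in>{1..l}. Y j -` G j \<inter> space M)) = ennreal (\<Prod>j\<in>{1..l}. prob (Y j -` G j \<inter> space M))"
        by (simp add: emeasure_eq_measure)
      then show "prob (\<Inter>j\<in>{1..l}. Y j -` G j \<inter> space M) = (\<Prod>j\<in>{1..l}. prob (Y j -` G j \<inter> space M))"
        by (simp add: prod_nonneg)
    qed
  qed
  have indD: "indep_vars (\<lambda>_. count_space UNIV) (\<lambda>j \<omega>. fst (Y j \<omega>)) {1..l}"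
    by (rule indep_vars_compose2[OF indepY]) (simp add: N'_def)
  have indG: "indep_vars (\<lambda>_. borel) (\<lambda>j \<omega>. snd (Y j \<omega>)) {1..l}"
    by (rule indep_vars_compose2[OF indepY]) (simp add: N'_def)
  have distD: "distr M (count_space UNIV) (\<lambda>\<omega>. fst (Y j \<omega>)) = distr M (count_space UNIV) (\<lambda>\<omega>. fst (Y 1 \<omega>))"
    if "j \<in> {1..l}" for j
  proof -
    have f: "fst \<in> measurable N' (count_space UNIV)" by (simp add: N'_def)
    have "distr M (count_space UNIV) (\<lambda>\<omega>. fst (Y j \<omega>)) = distr (distr M N' (Y j)) (count_space UNIV) fst"
      using distr_distr[OF f YM[of j]] by (simp add: comp_def)
    also have "\<dots> = distr (distr M N' (Y 1)) (count_space UNIV) fst" using lawY[OF that] by simp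
    also have "\<dots> = distr M (count_space UNIV) (\<lambda>\<omega>. fst (Y 1 \<omega>))"
      using distr_distr[OF f YM[of 1]] by (simp add: comp_def)
    finally show ?thesis .
  qed
  have distG: "distr M borel (\<lambda>\<omega>. snd (Y j \<omega>)) = distr M borel (\<lambda>\<omega>. snd (Y 1 \<omega>))"
    if "j \<in> {1..l}" for j
  proof -
    have f: "snd \<in> measurable N' borel" by (simp add: N'_def)
    have "distr M borel (\<lambda>\<omega>. snd (Y j \<omega>)) = distr (distr M N' (Y j)) borel snd"
      using distr_distr[OF f YM[of j]] by (simp add: comp_def)
    also have "\<dots> = distr (distr M N' (Y 1)) borel snd" using lawY[OF that] by simp
    also have "\<dots> = distr M borel (\<lambda>\<omega>. snd (Y 1 \<omega>))"
      using distr_distr[OF f YM[of 1]] by (simp add: comp_def)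
    finally show ?thesis .
  qed
  have fY: "(\<lambda>\<omega>. fst (Y j \<omega>)) = (\<lambda>\<omega>. tau (\<lambda>k. Bh ** A ** S k \<omega>) (Bh ** A) j - tau (\<lambda>k. Bh ** A ** S k \<omega>) (Bh ** A) (j - 1))" for j
    by (simp add: Y_def YD)
  have sY: "(\<lambda>\<omega>. snd (Y j \<omega>)) = (\<lambda>\<omega>. gamma (\<lambda>k. Bh ** A ** S k \<omega>) (Bh ** A) j)" for j
    by (simp add: Y_def YG)
  show ?thesis
  proof (intro conjI ballI)
    show "indep_vars (\<lambda>_. count_space UNIV) (\<lambda>j \<omega>. tau (\<lambda>k. Bh ** A ** S k \<omega>) (Bh ** A) j - tau (\<lambda>k. Bh ** A ** S k \<omega>) (Bh ** A) (j - 1)) {1..l}"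
      using indD unfolding fY .
    show "indep_vars (\<lambda>_. borel) (\<lambda>j \<omega>. gamma (\<lambda>k. Bh ** A ** S k \<omega>) (Bh ** A) j) {1..l}"
      using indG unfolding sY .
    fix j assume j: "j \<in> {1..l}"
    show "distr M (count_space UNIV) (\<lambda>\<omega>. tau (\<lambda>k. Bh ** A ** S k \<omega>) (Bh ** A) j - tau (\<lambda>k. Bh ** A ** S k \<omega>) (Bh ** A) (j - 1)) =
        distr M (count_space UNIV) (\<lambda>\<omega>. tau (\<lambda>k. Bh ** A ** S k \<omega>) (Bh ** A) 1 - tau (\<lambda>k. Bh ** A ** S k \<omega>) (Bh ** A) 0)"
      using distD[OF j] unfolding fY by simp
  next
    fix j assume j: "j \<in> {1..l}"
    show "distr M borel (\<lambda>\<omega>. gamma (\<lambda>k. Bh ** A ** S k \<omega>) (Bh ** A) j) = distr M borel (\<lambda>\<omega>. gamma (\<lambda>k. Bh ** A ** S k \<omega>) (Bh ** A) 1)"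
      using distG[OF j] unfolding sY .
  qed
qed


end
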